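(* Let $\mathcal X$ be finite with $N=|\mathcal X|\ge2$, $c\in(0,1/N]$, $\varepsilon\ge0$, and let $K\in\mathcal M(\varepsilon,c)$. Then for all $P_X,Q_X\in\mathcal Q_{\mathcal X}(c)$ with $\mathrm{TV}(P_X\|Q_X)\le\delta$, $$H^2(K\circ P_X\|K\circ Q_X)\le\Xi(\varepsilon,c)\left(2-\frac{4}{\sqrt{(1-Nc)e^\varepsilon+1}+1}\right)\delta,$$ where $\Xi(\varepsilon,c)=\min\left\{\frac{e^\varepsilon-1}{e^\varepsilon(1-Nc)+1},1\right\}$.
   Context: $H^2(P\|Q)=\sum_y Q(y)\big(1-\sqrt{P(y)/Q(y)}\big)^2$ is the squared Hellinger divergence (the $f$-divergence with $f(t)=(1-\sqrt t)^2$), and $\mathrm{TV}(P\|Q)=\frac12\sum|P-Q|$. A kernel $K$ is a row-stochastic matrix with entries $K_{Y|X=x}(y)$, $(K\circ P_X)(y)=\sum_xK_{Y|X=x}(y)P_X(x)$. PML: $\ell_{K\times P_X}(X\to y)=\log\frac{\max_x K_{Y|X=x}(y)}{(K\circ P_X)(y)}$ for full-support $P_X$ and $(K\circ P_X)(y)>0$. $\mathcal Q_{\mathcal X}(c)=\{P_X:\min_xP_X(x)\ge c\}$; $C(K,\mathcal P)=\sup_{P_X\in\mathcal P}\sup_{y:(K\circ P_X)(y)>0}\ell_{K\times P_X}(X\to y)$; $\mathcal M(\varepsilon,c)$ is the set of kernels from $\mathcal X$ to a finite output set with $C(K,\mathcal Q_{\mathcal X}(c))\le\varepsilon$. *)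

theory Defs
  imports Complex_Main
begin

definition is_dist :: "('a::finite \<Rightarrow> real) \<Rightarrow> bool" where
  "is_dist P \<longleftrightarrow> (\<forall>a. P a \<ge> 0) \<and> (\<Sum>a\<in>UNIV. P a) = 1"

text \<open>Kernel (row-stochastic matrix): K x y = K_{Y|X=x}(y).\<close>
definition is_kernel :: "('x::finite \<Rightarrow> 'y::finite \<Rightarrow> real) \<Rightarrow> bool" where
  "is_kernel K \<longleftrightarrow> (\<forall>x y. K x y \<ge> 0) \<and> (\<forall>x. (\<Sum>y\<in>UNIV. K x y) = 1)"

definition push :: "('x::finite \<Rightarrow> 'y::finite \<Rightarrow> real) \<Rightarrow> ('x \<Rightarrow> real) \<Rightarrow> 'y \<Rightarrow> real" where
  "push K P y = (\<Sum>x\<in>UNIV. K x y * P x)"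

definition PML :: "('x::finite \<Rightarrow> 'y::finite \<Rightarrow> real) \<Rightarrow> ('x \<Rightarrow> real) \<Rightarrow> 'y \<Rightarrow> real" where
  "PML K P y = ln (Max (range (\<lambda>x. K x y)) / push K P y)"

definition Qset :: "real \<Rightarrow> ('x::finite \<Rightarrow> real) set" where
  "Qset c = {P. is_dist P \<and> Min (range P) \<ge> c}"

text \<open>M(eps,c): kernels K with C(K, Q(c)) <= eps, where C is the supremum of PML over
  P in Q(c) and y with (K o P)(y) > 0; "sup <= eps" is written as "every value <= eps".\<close>
definition Mset :: "real \<Rightarrow> real \<Rightarrow> ('x::finite \<Rightarrow> 'y::finite \<Rightarrow> real) set" where
  "Mset eps c = {K. is_kernel K \<and>
     (\<forall>P\<in>Qset c. \<forall>y. push K P y > 0 \<longrightarrow> PML K P y \<le> eps)}"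

text \<open>Squared Hellinger divergence as an f-divergence, f(t) = (1 - sqrt t)^2, with the
  standard convention 0 f(p/0) = p * lim_{t\<rightarrow>\<infinity>} f(t)/t = p.\<close>
definition hellinger2 :: "('y::finite \<Rightarrow> real) \<Rightarrow> ('y \<Rightarrow> real) \<Rightarrow> real" where
  "hellinger2 P Q = (\<Sum>y\<in>UNIV. if Q y > 0 then Q y * (1 - sqrt (P y / Q y))^2 else P y)"

definition TV :: "('a::finite \<Rightarrow> real) \<Rightarrow> ('a \<Rightarrow> real) \<Rightarrow> real" where
  "TV P Q = (1/2) * (\<Sum>a\<in>UNIV. \<bar>P a - Q a\<bar>)"

definition Xi :: "real \<Rightarrow> real \<Rightarrow> nat \<Rightarrow> real" where
  "Xi eps c N = min ((exp eps - 1) / (exp eps * (1 - real N * c) + 1)) 1"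

end

theory Submission
  imports Defs
begin

lemma split_compl:
  fixes f :: "'a::finite \<Rightarrow> real"
  shows "sum f UNIV = sum f A + sum f (- A)"
  using sum.subset_diff[of A UNIV f] by (simp add: Compl_eq_Diff_UNIV add.commute)

lemma Qset_facts:
  assumes "P \<in> Qset c"
  shows "P x \<ge> c" "is_dist P"
proof -
  have "Min (range P) \<le> P x" by (rule Min_le) auto
  then show "P x \<ge> c" using assms by (auto simp: Qset_def)
  show "is_dist P" using assms by (auto simp: Qset_def)
qed

lemma bound_push:
  assumes "K \<in> Mset eps c" "Q \<in> Qset c" "c > 0"
  shows "K x y \<le> exp eps * push K Q y"
proof -
  have kern: "is_kernel K" and pml: "\<forall>P\<in>Qset c. \<forall>y. push K P y > 0 \<longrightarrow> PML K P y \<le> eps"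
    using assms(1) by (auto simp: Mset_def)
  have Qc: "\<And>x. Q x \<ge> c" using Qset_facts[OF assms(2)] by blast
  have nn: "\<And>x. K x y * Q x \<ge> 0" using kern Qc assms(3)
    by (metis is_kernel_def less_le_trans mult_nonneg_nonneg order_less_imp_le)
  have Kle: "K x y \<le> Max (range (\<lambda>x. K x y))" by (rule Max_ge) auto
  show ?thesis
  proof (cases "push K Q y > 0")
    case True
    then have L: "ln (Max (range (\<lambda>x. K x y)) / push K Q y) \<le> eps"
      using pml assms(2) by (auto simp: PML_def)
    show ?thesis
    proof (cases "Max (range (\<lambda>x. K x y)) > 0")
      case True
      then have pos: "Max (range (\<lambda>x. K x y)) / push K Q y > 0" using \<open>push K Q y > 0\<close> by simp
      have "Max (range (\<lambda>x. K x y)) / push K Q y \<le> exp eps"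
        using L pos by (metis exp_le_cancel_iff exp_ln)
      then have "Max (range (\<lambda>x. K x y)) \<le> exp eps * push K Q y"
        using \<open>push K Q y > 0\<close> by (simp add: divide_le_eq)
      then show ?thesis using Kle by linarith
    next
      case False
      then show ?thesis using Kle \<open>push K Q y > 0\<close>
        by (smt (verit) exp_gt_zero mult_pos_pos)
    qed
  next
    case False
    have "push K Q y \<ge> 0" unfolding push_def using nn by (simp add: sum_nonneg)
    then have "push K Q y = 0" using False by simp
    then have "\<forall>x\<in>UNIV. K x y * Q x = 0" unfolding push_def
      using nn by (subst sum_nonneg_eq_0_iff[symmetric]) auto
    then have "K x y * Q x = 0" by blast
    moreover have "Q x > 0" using Qc[of x] assms(3) by linarith
    ultimately have "K x y = 0" by simp
    then show ?thesis using \<open>push K Q y = 0\<close> by simp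
  qed
qed

lemma eta_bound:
  fixes K :: "'x::finite \<Rightarrow> 'y::finite \<Rightarrow> real"
  assumes "K \<in> Mset eps c" "c > 0" "real (card (UNIV::'x set)) * c \<le> 1"
  shows "(\<Sum>y\<in>A. K x1 y) - (\<Sum>y\<in>A. K x2 y)
     \<le> (exp eps - 1) / (exp eps * (1 - real (card (UNIV::'x set)) * c) + 1)"
proof -
  define N where "N = real (card (UNIV::'x set))"
  define a where "a = 1 - N * c"
  define E where "E = exp eps"
  define S where "S y = (\<Sum>x\<in>UNIV. K x y)" for y
  have a0: "a \<ge> 0" using assms(3) by (simp add: a_def N_def)
  have E0: "E > 0" by (simp add: E_def)
  have kern: "is_kernel K" using assms(1) by (simp add: Mset_def)
  have key: "K x y \<le> E * (c * S y + a * K z y)" for x y z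
  proof -
    define Pz where "Pz = (\<lambda>x. c + (if x = z then a else 0))"
    have sumP: "(\<Sum>x\<in>UNIV. Pz x) = 1"
      unfolding Pz_def by (simp add: sum.distrib a_def N_def)
    have "Pz \<in> Qset c"
      unfolding Qset_def is_dist_def
    proof (intro CollectI conjI allI)
      show "Pz x \<ge> 0" for x using a0 assms(2) by (simp add: Pz_def)
      show "(\<Sum>x\<in>UNIV. Pz x) = 1" by (rule sumP)
      show "c \<le> Min (range Pz)"
        using a0 by (subst Min_ge_iff) (auto simp: Pz_def)
    qed
    from bound_push[OF assms(1) this assms(2)]
    have "K x y \<le> E * push K Pz y" by (simp add: E_def)
    moreover have "push K Pz y = c * S y + a * K z y"
    proof -
      have "\<And>x. K x y * Pz x = c * K x y + (if x = z then a * K z y else 0)"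
        by (simp add: Pz_def algebra_simps)
      then show ?thesis unfolding push_def S_def
        by (simp add: sum.distrib sum_distrib_left)
    qed
    ultimately show ?thesis by simp
  qed
  define u where "u = (\<Sum>y\<in>A. K x1 y)"
  define w where "w = (\<Sum>y\<in>A. K x2 y)"
  have r1: "(\<Sum>y\<in>A. K x1 y) \<le> (\<Sum>y\<in>A. E * (c * S y + a * K x2 y))"
    by (rule sum_mono) (rule key)
  have r2: "(\<Sum>y\<in>-A. K x2 y) \<le> (\<Sum>y\<in>-A. E * (c * S y + a * K x1 y))"
    by (rule sum_mono) (rule key)
  have e1: "u \<le> E * (c * (\<Sum>y\<in>A. S y) + a * w)"
    using r1 by (simp add: u_def w_def sum_distrib_left sum.distrib distrib_left)
  have e2: "(\<Sum>y\<in>-A. K x2 y) \<le> E * (c * (\<Sum>y\<in>-A. S y) + a * (\<Sum>y\<in>-A. K x1 y))"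
    using r2 by (simp add: sum_distrib_left sum.distrib distrib_left)
  have t1: "(\<Sum>y\<in>-A. K x2 y) = 1 - w"
    using split_compl[of "K x2" A] kern by (simp add: is_kernel_def w_def)
  have t2: "(\<Sum>y\<in>-A. K x1 y) = 1 - u"
    using split_compl[of "K x1" A] kern by (simp add: is_kernel_def u_def)
  have "(\<Sum>y\<in>UNIV. S y) = N"
    unfolding S_def N_def using kern
    by (subst sum.swap) (simp add: is_kernel_def)
  then have t3: "(\<Sum>y\<in>A. S y) + (\<Sum>y\<in>-A. S y) = N"
    using split_compl[of S A] by simp
  have e1': "u \<le> E * (c * sum S A) + E * a * w" using e1 by (simp add: algebra_simps)
  have e2': "1 - w \<le> E * (c * sum S (-A)) + E * a * (1 - u)" using e2 t1 t2 by (simp add: algebra_simps)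
  have e3: "E * (c * sum S A) + E * (c * sum S (-A)) = E * (c * N)" using t3 by (metis distrib_left)
  have e4: "E * a * w + E * a * (1 - u) = E * (a * (1 - u + w))" by (simp add: algebra_simps)
  have "u + (1 - w) \<le> E * (c * N) + E * (a * (1 - u + w))" using e1' e2' e3 e4 by linarith
  then have "u + (1 - w) \<le> E * (c * N + a * (1 - u + w))" by (simp add: distrib_left)
  also have "c * N + a * (1 - u + w) = 1 - a * (u - w)" by (simp add: a_def algebra_simps)
  finally have "(u - w) * (E * a + 1) \<le> E - 1" by (simp add: algebra_simps)
  moreover have "E * a \<ge> 0" using E0 a0 by simp
  then have "E * a + 1 > 0" by linarith
  ultimately have "u - w \<le> (E - 1) / (E * a + 1)" using pos_le_divide_eq by blast
  then show ?thesis unfolding u_def w_def E_def a_def N_def .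
qed

lemma tv_lin:
  fixes f P Q :: "'x::finite \<Rightarrow> real"
  assumes "is_dist P" "is_dist Q" "\<And>x1 x2. f x1 - f x2 \<le> \<eta>"
  shows "(\<Sum>x\<in>UNIV. f x * (P x - Q x)) \<le> \<eta> * TV P Q"
proof -
  define m where "m = Min (range f)"
  have "m \<in> range f" unfolding m_def by (rule Min_in) auto
  then obtain x0 where x0: "f x0 = m" by auto
  have fm: "f x \<ge> m" for x unfolding m_def by (rule Min_le) auto
  have s0: "(\<Sum>x\<in>UNIV. P x - Q x) = 0" using assms(1,2)
    by (simp add: is_dist_def sum_subtractf)
  have "\<And>x. f x * (P x - Q x) = (f x - m) * (P x - Q x) + m * (P x - Q x)"
    by (simp add: algebra_simps)
  then have "(\<Sum>x\<in>UNIV. f x * (P x - Q x))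
      = (\<Sum>x\<in>UNIV. (f x - m) * (P x - Q x)) + m * (\<Sum>x\<in>UNIV. P x - Q x)"
    by (simp only: sum.distrib sum_distrib_left)
  then have "(\<Sum>x\<in>UNIV. f x * (P x - Q x)) = (\<Sum>x\<in>UNIV. (f x - m) * (P x - Q x))"
    using s0 by simp
  also have "\<dots> \<le> (\<Sum>x\<in>UNIV. \<eta> * ((P x - Q x + \<bar>P x - Q x\<bar>) / 2))"
  proof (rule sum_mono)
    fix x
    have h1: "0 \<le> f x - m" using fm[of x] by simp
    have h2: "f x - m \<le> \<eta>" using assms(3)[of x x0] x0 by simp
    have h3: "P x - Q x \<le> (P x - Q x + \<bar>P x - Q x\<bar>) / 2 " by simp
    have h4: "(P x - Q x + \<bar>P x - Q x\<bar>) / 2 \<ge> 0" by simp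
    have "(f x - m) * (P x - Q x) \<le> (f x - m) * ((P x - Q x + \<bar>P x - Q x\<bar>) / 2)"
      by (rule mult_left_mono[OF h3 h1])
    also have "\<dots> \<le> \<eta> * ((P x - Q x + \<bar>P x - Q x\<bar>) / 2)"
      by (rule mult_right_mono[OF h2 h4])
    finally show "(f x - m) * (P x - Q x) \<le> \<eta> * ((P x - Q x + \<bar>P x - Q x\<bar>) / 2)" .
  qed
  also have "\<dots> = (\<Sum>x\<in>UNIV. (\<eta>/2) * (P x - Q x) + (\<eta>/2) * \<bar>P x - Q x\<bar>)"
    by (rule sum.cong) (simp_all add: field_simps)
  also have "\<dots> = (\<eta>/2) * (\<Sum>x\<in>UNIV. P x - Q x) + (\<eta>/2) * (\<Sum>x\<in>UNIV. \<bar>P x - Q x\<bar>)"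
    by (simp only: sum.distrib sum_distrib_left)
  also have "\<dots> = \<eta> * TV P Q" using s0 by (simp add: TV_def)
  finally show ?thesis .
qed

lemma hel_term:
  fixes p q R :: real
  assumes "p \<ge> 0" "q \<ge> 0" "p \<le> R * q" "q \<le> R * p" "R \<ge> 1"
  shows "(sqrt p - sqrt q)^2 \<le> \<bar>p - q\<bar> * ((sqrt R - 1) / (sqrt R + 1))"
proof -
  have gen: "(sqrt p - sqrt q)^2 \<le> \<bar>p - q\<bar> * ((sqrt R - 1) / (sqrt R + 1))"
    if "p \<ge> 0" "q \<ge> 0" "p \<le> R * q" "q \<le> p" for p q
  proof -
    define sp where "sp = sqrt p"
    define sq where "sq = sqrt q"
    define r where "r = sqrt R"
    have r1: "r \<ge> 1" using assms(5) by (simp add: r_def)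
    have sq0: "sq \<ge> 0" "sp \<ge> sq" using that by (auto simp: sp_def sq_def)
    have "sqrt p \<le> sqrt (R * q)" using that by simp
    then have spr: "sp \<le> r * sq" by (simp add: sp_def sq_def r_def real_sqrt_mult)
    have pq: "\<bar>p - q\<bar> = (sp - sq) * (sp + sq)"
      using that by (simp add: sp_def sq_def algebra_simps)
    have "(sp - sq) * (r + 1) \<le> (sp + sq) * (r - 1)"
      using spr by (simp add: algebra_simps)
    then have "sp - sq \<le> (sp + sq) * ((r - 1) / (r + 1))"
      using r1 by (simp add: pos_le_divide_eq mult.assoc[symmetric] )
    then have "(sp - sq) * (sp - sq) \<le> (sp - sq) * ((sp + sq) * ((r - 1) / (r + 1)))"
      using sq0 by (intro mult_left_mono) auto
    then show ?thesis
      by (simp add: pq power2_eq_square sp_def[symmetric] sq_def[symmetric] r_def[symmetric] mult.assoc)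
  qed
  show ?thesis
  proof (cases "q \<le> p")
    case True then show ?thesis using gen assms by blast
  next
    case False
    then have "(sqrt q - sqrt p)^2 \<le> \<bar>q - p\<bar> * ((sqrt R - 1) / (sqrt R + 1))"
      using gen assms by simp
    then show ?thesis by (simp add: power2_commute abs_minus_commute)
  qed
qed

lemma push_diff:
  fixes K :: "'x::finite \<Rightarrow> 'y::finite \<Rightarrow> real"
  assumes "K \<in> Mset eps c" "c > 0" "real (card (UNIV::'x set)) * c \<le> 1"
    "P \<in> Qset c" "Q \<in> Qset c"
  shows "(\<Sum>y\<in>A. push K P y - push K Q y) \<le> Xi eps c (card (UNIV::'x set)) * TV P Q"
proof -
  have kern: "is_kernel K" using assms(1) by (simp add: Mset_def)
  define f where "f x = (\<Sum>y\<in>A. K x y)" for x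
  have "(\<Sum>y\<in>A. push K P y - push K Q y) = (\<Sum>y\<in>A. \<Sum>x\<in>UNIV. K x y * (P x - Q x))"
    unfolding push_def by (simp add: sum_subtractf right_diff_distrib)
  also have "\<dots> = (\<Sum>x\<in>UNIV. f x * (P x - Q x))"
    unfolding f_def by (subst sum.swap) (simp add: sum_distrib_right)
  also have "\<dots> \<le> Xi eps c (card (UNIV::'x set)) * TV P Q"
  proof (rule tv_lin)
    show "is_dist P" "is_dist Q" using Qset_facts assms(4,5) by blast+
    fix x1 x2
    have a: "f x1 - f x2 \<le> (exp eps - 1) / (exp eps * (1 - real (card (UNIV::'x set)) * c) + 1)"
      unfolding f_def by (rule eta_bound[OF assms(1-3)])
    have "f x1 \<le> (\<Sum>y\<in>UNIV. K x1 y)" unfolding f_def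
      using kern by (intro sum_mono2) (auto simp: is_kernel_def)
    moreover have "f x2 \<ge> 0" unfolding f_def using kern by (intro sum_nonneg) (auto simp: is_kernel_def)
    ultimately have b: "f x1 - f x2 \<le> 1" using kern by (simp add: is_kernel_def)
    show "f x1 - f x2 \<le> Xi eps c (card (UNIV::'x set))"
      unfolding Xi_def using a b by simp
  qed
  finally show ?thesis .
qed

lemma aux_g:
  fixes s :: real
  assumes "s \<ge> 0"
  shows "2 - 4 / (s + 1) = 2 * ((s - 1) / (s + 1))"
  using assms by (simp add: field_simps)

theorem corollary2:
  fixes K :: "'x::finite \<Rightarrow> 'y::finite \<Rightarrow> real"
    and P Q :: "'x \<Rightarrow> real"
    and c eps \<delta> :: real
  assumes "(card (UNIV :: 'x set)) \<ge> 2"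
    and "0 < c" and "c \<le> 1 / real (card (UNIV :: 'x set))"
    and "eps \<ge> 0"
    and "K \<in> Mset eps c"
    and "P \<in> Qset c" and "Q \<in> Qset c"
    and "TV P Q \<le> \<delta>"
  shows "hellinger2 (push K P) (push K Q)
     \<le> Xi eps c (card (UNIV :: 'x set))
       * (2 - 4 / (sqrt ((1 - real (card (UNIV :: 'x set)) * c) * exp eps + 1) + 1)) * \<delta>"
proof -
  define N where "N = real (card (UNIV::'x set))"
  define a where "a = 1 - N * c"
  define E where "E = exp eps"
  define R where "R = (1 - N * c) * E + 1"
  define g where "g = (sqrt R - 1) / (sqrt R + 1)"
  define X where "X = Xi eps c (card (UNIV :: 'x set))"
  define p where "p = push K P"
  define q where "q = push K Q"
  have "card (UNIV::'x set) > 0" using assms(1) by linarith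
  then have Npos: "N > 0" by (simp add: N_def)
  have Nc: "N * c \<le> 1" using assms(3) Npos by (simp add: N_def field_simps)
  have a0: "a \<ge> 0" using Nc by (simp add: a_def)
  have E1: "E \<ge> 1" using assms(4) by (simp add: E_def)
  have R1: "R \<ge> 1" using a0 E1 by (simp add: R_def a_def)
  have kern: "is_kernel K" using assms(5) by (simp add: Mset_def)
  have Pc: "\<And>x. P x \<ge> c" and Qc: "\<And>x. Q x \<ge> c" using Qset_facts assms(6,7) by blast+
  have dP: "is_dist P" and dQ: "is_dist Q" using Qset_facts assms(6,7) by blast+
  have pn: "p y \<ge> 0" and qn: "q y \<ge> 0" for y
    unfolding p_def q_def push_def using kern dP dQ
    by (auto simp: is_kernel_def is_dist_def intro!: sum_nonneg)
  have ratio: "push K P1 y \<le> R * push K Q1 y" if "P1 \<in> Qset c" "Q1 \<in> Qset c" for P1 Q1 y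
  proof -
    have P1c: "\<And>x. P1 x \<ge> c" and Q1c: "\<And>x. Q1 x \<ge> c" using Qset_facts that by blast+
    have d1: "is_dist P1" using Qset_facts that by blast
    have "push K P1 y - push K Q1 y = (\<Sum>x\<in>UNIV. K x y * (P1 x - Q1 x))"
      unfolding push_def by (simp add: sum_subtractf right_diff_distrib)
    also have "\<dots> \<le> (\<Sum>x\<in>UNIV. (E * push K Q1 y) * (P1 x - c))"
    proof (rule sum_mono)
      fix x
      have k0: "K x y \<ge> 0" using kern by (simp add: is_kernel_def)
      have "K x y * (P1 x - Q1 x) \<le> K x y * (P1 x - c)"
        using k0 Q1c[of x] by (intro mult_left_mono) auto
      also have "\<dots> \<le> (E * push K Q1 y) * (P1 x - c)"
        using bound_push[OF assms(5) that(2) assms(2), of x y] P1c[of x]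
        by (intro mult_right_mono) (auto simp: E_def)
      finally show "K x y * (P1 x - Q1 x) \<le> (E * push K Q1 y) * (P1 x - c)" .
    qed
    also have "\<dots> = (E * push K Q1 y) * a"
      using d1 by (simp add: sum_distrib_left[symmetric] sum_subtractf is_dist_def a_def N_def)
    finally show ?thesis by (simp add: R_def a_def algebra_simps)
  qed
  have rpq: "p y \<le> R * q y" and rqp: "q y \<le> R * p y" for y
    using ratio assms(6,7) by (auto simp: p_def q_def)
  have "hellinger2 p q = (\<Sum>y\<in>UNIV. (sqrt (p y) - sqrt (q y))^2)"
    unfolding hellinger2_def
  proof (rule sum.cong)
    fix y
    show "(if q y > 0 then q y * (1 - sqrt (p y / q y))^2 else p y) = (sqrt (p y) - sqrt (q y))^2"
    proof (cases "q y > 0")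
      case True
      have "q y * (1 - sqrt (p y / q y))^2 = (sqrt (q y))^2 * (1 - sqrt (p y) / sqrt (q y))^2"
        using True by (simp add: real_sqrt_divide)
      also have "\<dots> = (sqrt (q y) * (1 - sqrt (p y) / sqrt (q y)))^2"
        by (simp add: power_mult_distrib)
      also have "sqrt (q y) * (1 - sqrt (p y) / sqrt (q y)) = sqrt (q y) - sqrt (p y)"
        using True by (simp add: field_simps)
      finally show ?thesis using True by (simp add: power2_commute)
    next
      case False
      then have "q y = 0" using qn[of y] by simp
      then show ?thesis using pn[of y] by simp
    qed
  qed simp
  also have "\<dots> \<le> (\<Sum>y\<in>UNIV. \<bar>p y - q y\<bar> * g)"
    unfolding g_def by (intro sum_mono hel_term pn qn rpq rqp R1)
  also have "\<dots> = g * (\<Sum>y\<in>UNIV. \<bar>p y - q y\<bar>)"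
    by (simp add: sum_distrib_left mult.commute)
  finally have h1: "hellinger2 p q \<le> g * (\<Sum>y\<in>UNIV. \<bar>p y - q y\<bar>)" .
  have h2: "(\<Sum>y\<in>UNIV. \<bar>p y - q y\<bar>) \<le> 2 * X * \<delta>"  proof -
    define A where "A = {y. q y \<le> p y}"
    have "(\<Sum>y\<in>UNIV. \<bar>p y - q y\<bar>) = (\<Sum>y\<in>A. \<bar>p y - q y\<bar>) + (\<Sum>y\<in>-A. \<bar>p y - q y\<bar>)"
      by (rule split_compl)
    also have "(\<Sum>y\<in>A. \<bar>p y - q y\<bar>) = (\<Sum>y\<in>A. push K P y - push K Q y)"
      by (rule sum.cong) (auto simp: A_def p_def q_def)
    also have "(\<Sum>y\<in>-A. \<bar>p y - q y\<bar>) = (\<Sum>y\<in>-A. push K Q y - push K P y)"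
      by (rule sum.cong) (auto simp: A_def p_def q_def)
    finally have "(\<Sum>y\<in>UNIV. \<bar>p y - q y\<bar>) \<le> X * TV P Q + X * TV Q P"
      using push_diff[OF assms(5) assms(2) Nc[unfolded N_def] assms(6,7), of A]
        push_diff[OF assms(5) assms(2) Nc[unfolded N_def] assms(7,6), of "-A"]
      by (simp add: X_def)
    also have "TV Q P = TV P Q" unfolding TV_def by (simp add: abs_minus_commute)
    finally have s: "(\<Sum>y\<in>UNIV. \<bar>p y - q y\<bar>) \<le> 2 * X * TV P Q" by simp
    have X0: "X \<ge> 0" unfolding X_def Xi_def using E1 a0
      by (auto simp: E_def[symmetric] a_def[symmetric] N_def[symmetric] intro!: divide_nonneg_pos
          add_nonneg_pos mult_nonneg_nonneg)
    have "2 * X * TV P Q \<le> 2 * X * \<delta>" using X0 assms(8) by (intro mult_left_mono) auto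
    then show ?thesis using s by linarith
  qed
  have g0: "g \<ge> 0" unfolding g_def using R1 by simp
  have h3: "hellinger2 p q \<le> g * (2 * X * \<delta>)"
    using h1 mult_left_mono[OF h2 g0] by linarith
  have "sqrt R \<ge> 0" using R1 by simp
  then have "2 - 4 / (sqrt R + 1) = 2 * g" unfolding g_def by (rule aux_g)
  then have "g * (2 * X * \<delta>) = X * (2 - 4 / (sqrt R + 1)) * \<delta>" by simp
  then have "hellinger2 p q \<le> X * (2 - 4 / (sqrt R + 1)) * \<delta>" using h3 by linarith
  then show ?thesis by (simp only: p_def q_def X_def R_def E_def N_def)
qed

end
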